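(* In the RSP setting described in the context, for every $b\in\mathbb{N}^+$ with $b\le n$, the procedure $\textsc{LSBounds}(G,s,t,R,b)$ returns a pair $(L',U')$ with $L'\le C_{\mathrm{opt}}(G)\le U'$ and $U'/L'\in O(1+n/b)$, and it runs in time $O\big(f_G(n,m)\cdot(1+b+\log n)\big)$.
   Context: RSP setting: $G=(V,E,c,r)$ is a weakly connected directed graph with $n=|V|$, $m=|E|$ (so $m\ge n-1$), $c,r:E\to\mathbb{R}_{\ge0}$, vertices $s\ne t$, bound $R\ge 0$. Paths are edge sets; $P_v$ = set of paths from $s$ to $v$; $C_G(p)=\sum_{e\in p}c(e)$, $R_G(p)=\sum_{e\in p}r(e)$; $C_{\mathrm{opt}}(G)=\min\{C_G(p):p\in P_t,\ R_G(p)\le R\}$. It is assumed that a feasible path exists and $C_{\mathrm{opt}}(G)>0$. Arithmetic operations take $O(1)$ time. For $S>0$, $G^-_S=(V,E,c^-_S,r)$ with $c^-_S(e)=\lfloor c(e)/S\rfloor$. Bounds $L,U$: sort edges ascending by cost as $e_1,\dots,e_m$; $j^*$ is the smallest $j$ such that some $p\in P_t$ with $R_G(p)\le R$ uses only edges from $\{e_1,\dots,e_j\}$; $L=c(e_{j^*})$, $U=nL$. Scaling factors $S_i=2^{-i}U/(2n)$. Exact DP for integer costs $c':E\to\mathbb{N}_0$: $r_{v,j}=\min\{R(p): p\in P_v,\ C'(p)\le j\}$; row $j$ is computed by first setting $r'_{u,j}=\min_{e=(w,u),\,c'(e)>0}(r_{w,j-c'(e)}+r(e))$ in $O(m)$ time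 and then solving single-source shortest paths (weights $r$) from a new vertex $v_s$ in the graph $G^{(j)}$ consisting of the zero-cost edges of $G$, an edge $(v_s,s)$ of weight $0$ and edges $(v_s,u)$ of weight $r'_{u,j}$ for $u\ne s$. $f_G(n,m)$ denotes the time needed to compute one such row for any cost function $c':E\to\mathbb{N}_0$ (e.g. $f_G(n,m)=m+n\log n$ in general via Dijkstra with Fibonacci heaps). $\textsc{ExactRSP}(H,s,t,R,b)$ computes rows $j=0,1,\dots$ and returns $C_{\mathrm{opt}}(H)$ if it is $\le b$ and $\infty$ otherwise, in time $O(f_G(n,m)(1+\min\{b,C_{\mathrm{opt}}(H)\}))$. $\textsc{LSBounds}(G,s,t,R,b)$: for $i=0,1,2,\dots$, with $S=S_i$, if $\textsc{ExactRSP}(G^-_S,s,t,R,b)=\infty$ then return $(Sb,U)$ if $i=0$ and $(Sb,2S(b+n))$ otherwise. *)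

theory Defs
  imports Complex_Main
begin

text \<open>Graph representation: vertex set V and edge-identifier set E (both sets of naturals),
  each edge e has source src e and target trg e. Parallel edges are allowed.\<close>

definition weakly_connected :: "nat set \<Rightarrow> nat set \<Rightarrow> (nat \<Rightarrow> nat) \<Rightarrow> (nat \<Rightarrow> nat) \<Rightarrow> bool" where
  "weakly_connected V E src trg \<longleftrightarrow>
     (\<forall>u\<in>V. \<forall>v\<in>V. (u, v) \<in> ({(src e, trg e) | e. e \<in> E} \<union> {(trg e, src e) | e. e \<in> E})\<^sup>*)"

definition is_spath :: "nat set \<Rightarrow> (nat \<Rightarrow> nat) \<Rightarrow> (nat \<Rightarrow> nat) \<Rightarrow> nat \<Rightarrow> nat \<Rightarrow> nat list \<Rightarrow> bool" where
  "is_spath E src trg s v p \<longleftrightarrow>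
     set p \<subseteq> E \<and>
     (p = [] \<longrightarrow> v = s) \<and>
     (p \<noteq> [] \<longrightarrow> src (p ! 0) = s \<and> trg (last p) = v) \<and>
     (\<forall>i. Suc i < length p \<longrightarrow> trg (p ! i) = src (p ! Suc i)) \<and>
     distinct (s # map trg p)"

definition paths :: "nat set \<Rightarrow> (nat \<Rightarrow> nat) \<Rightarrow> (nat \<Rightarrow> nat) \<Rightarrow> nat \<Rightarrow> nat \<Rightarrow> nat set set" where
  "paths E src trg s v = {set p | p. is_spath E src trg s v p}"

definition copt :: "nat set \<Rightarrow> (nat \<Rightarrow> nat) \<Rightarrow> (nat \<Rightarrow> nat) \<Rightarrow> nat \<Rightarrow> nat \<Rightarrow> real
    \<Rightarrow> (nat \<Rightarrow> real) \<Rightarrow> (nat \<Rightarrow> real) \<Rightarrow> real" where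
  "copt E src trg s t R c r =
     Inf {sum c P | P. P \<in> paths E src trg s t \<and> sum r P \<le> R}"

definition floor_cost :: "real \<Rightarrow> (nat \<Rightarrow> real) \<Rightarrow> nat \<Rightarrow> real" where
  "floor_cost S c = (\<lambda>e. real_of_int \<lfloor>c e / S\<rfloor>)"

text \<open>Lower bound L, given a sorting es : {1..m} -> E of the edges ascending by cost.\<close>
definition jstar :: "nat set \<Rightarrow> (nat \<Rightarrow> nat) \<Rightarrow> (nat \<Rightarrow> nat) \<Rightarrow> nat \<Rightarrow> nat \<Rightarrow> real
    \<Rightarrow> (nat \<Rightarrow> real) \<Rightarrow> (nat \<Rightarrow> nat) \<Rightarrow> nat" where
  "jstar E src trg s t R r es =
     (LEAST j. \<exists>P\<in>paths E src trg s t. sum r P \<le> R \<and> P \<subseteq> es ` {1..j})"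

definition boundL :: "nat set \<Rightarrow> (nat \<Rightarrow> nat) \<Rightarrow> (nat \<Rightarrow> nat) \<Rightarrow> nat \<Rightarrow> nat \<Rightarrow> real
    \<Rightarrow> (nat \<Rightarrow> real) \<Rightarrow> (nat \<Rightarrow> real) \<Rightarrow> (nat \<Rightarrow> nat) \<Rightarrow> real" where
  "boundL E src trg s t R c r es = c (es (jstar E src trg s t R r es))"

definition boundU :: "nat set \<Rightarrow> nat set \<Rightarrow> (nat \<Rightarrow> nat) \<Rightarrow> (nat \<Rightarrow> nat) \<Rightarrow> nat \<Rightarrow> nat \<Rightarrow> real
    \<Rightarrow> (nat \<Rightarrow> real) \<Rightarrow> (nat \<Rightarrow> real) \<Rightarrow> (nat \<Rightarrow> nat) \<Rightarrow> real" where
  "boundU V E src trg s t R c r es = real (card V) * boundL E src trg s t R c r es"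

definition scaleS :: "nat set \<Rightarrow> nat set \<Rightarrow> (nat \<Rightarrow> nat) \<Rightarrow> (nat \<Rightarrow> nat) \<Rightarrow> nat \<Rightarrow> nat \<Rightarrow> real
    \<Rightarrow> (nat \<Rightarrow> real) \<Rightarrow> (nat \<Rightarrow> real) \<Rightarrow> (nat \<Rightarrow> nat) \<Rightarrow> nat \<Rightarrow> real" where
  "scaleS V E src trg s t R c r es i =
     boundU V E src trg s t R c r es / (2 * real (card V)) / 2 ^ i"

text \<open>C_opt of G^-_{S_i}; ExactRSP(G^-_{S_i}, s, t, R, b) returns infinity iff this exceeds b.\<close>
definition copt_i :: "nat set \<Rightarrow> nat set \<Rightarrow> (nat \<Rightarrow> nat) \<Rightarrow> (nat \<Rightarrow> nat) \<Rightarrow> nat \<Rightarrow> nat \<Rightarrow> real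
    \<Rightarrow> (nat \<Rightarrow> real) \<Rightarrow> (nat \<Rightarrow> real) \<Rightarrow> (nat \<Rightarrow> nat) \<Rightarrow> nat \<Rightarrow> real" where
  "copt_i V E src trg s t R c r es i =
     copt E src trg s t R (floor_cost (scaleS V E src trg s t R c r es i) c) r"

definition exact_fails :: "nat set \<Rightarrow> nat set \<Rightarrow> (nat \<Rightarrow> nat) \<Rightarrow> (nat \<Rightarrow> nat) \<Rightarrow> nat \<Rightarrow> nat \<Rightarrow> real
    \<Rightarrow> (nat \<Rightarrow> real) \<Rightarrow> (nat \<Rightarrow> real) \<Rightarrow> (nat \<Rightarrow> nat) \<Rightarrow> nat \<Rightarrow> nat \<Rightarrow> bool" where
  "exact_fails V E src trg s t R c r es b i \<longleftrightarrow> copt_i V E src trg s t R c r es i > real b"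

text \<open>Index of the iteration at which LSBounds returns.\<close>
definition ls_iter :: "nat set \<Rightarrow> nat set \<Rightarrow> (nat \<Rightarrow> nat) \<Rightarrow> (nat \<Rightarrow> nat) \<Rightarrow> nat \<Rightarrow> nat \<Rightarrow> real
    \<Rightarrow> (nat \<Rightarrow> real) \<Rightarrow> (nat \<Rightarrow> real) \<Rightarrow> (nat \<Rightarrow> nat) \<Rightarrow> nat \<Rightarrow> nat" where
  "ls_iter V E src trg s t R c r es b = (LEAST i. exact_fails V E src trg s t R c r es b i)"

definition lsbounds :: "nat set \<Rightarrow> nat set \<Rightarrow> (nat \<Rightarrow> nat) \<Rightarrow> (nat \<Rightarrow> nat) \<Rightarrow> nat \<Rightarrow> nat \<Rightarrow> real
    \<Rightarrow> (nat \<Rightarrow> real) \<Rightarrow> (nat \<Rightarrow> real) \<Rightarrow> (nat \<Rightarrow> nat) \<Rightarrow> nat \<Rightarrow> real \<times> real" where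
  "lsbounds V E src trg s t R c r es b =
     (let k = ls_iter V E src trg s t R c r es b;
          S = scaleS V E src trg s t R c r es k
      in (S * real b,
          if k = 0 then boundU V E src trg s t R c r es else 2 * S * (real b + real (card V))))"

text \<open>Running time of LSBounds, with f n m the time to compute one DP row:
  iteration i costs O(f(n,m)) for building G^-_{S_i} plus
  f(n,m) * (1 + min{b, C_opt(G^-_{S_i})}) for ExactRSP.\<close>
definition ls_time :: "(nat \<Rightarrow> nat \<Rightarrow> real) \<Rightarrow> nat set \<Rightarrow> nat set \<Rightarrow> (nat \<Rightarrow> nat) \<Rightarrow> (nat \<Rightarrow> nat)
    \<Rightarrow> nat \<Rightarrow> nat \<Rightarrow> real \<Rightarrow> (nat \<Rightarrow> real) \<Rightarrow> (nat \<Rightarrow> real) \<Rightarrow> (nat \<Rightarrow> nat) \<Rightarrow> nat \<Rightarrow> real" where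
  "ls_time f V E src trg s t R c r es b =
     (\<Sum>i\<le>ls_iter V E src trg s t R c r es b.
        f (card V) (card E) * (2 + min (real b) (copt_i V E src trg s t R c r es i)))"

end

theory Submission
  imports Defs
begin


lemma spath_facts:
  assumes "is_spath E src trg s v p" "\<forall>e\<in>E. trg e \<in> V" "s \<in> V" "finite V"
  shows "length p + 1 \<le> card V" "card (set p) = length p" "set p \<subseteq> E"
proof -
  have d: "distinct (s # map trg p)" and sub: "set p \<subseteq> E" using assms(1) unfolding is_spath_def by auto
  have "set (s # map trg p) \<subseteq> V" using sub assms(2,3) by auto
  hence "card (set (s # map trg p)) \<le> card V" using assms(4) card_mono by blast
  moreover have "card (set (s # map trg p)) = length p + 1" using d distinct_card by fastforce
  ultimately show "length p + 1 \<le> card V" by simp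
  have "distinct p" using d distinct_map by auto
  thus "card (set p) = length p" by (simp add: distinct_card)
  show "set p \<subseteq> E" by fact
qed

lemma path_facts:
  assumes "P \<in> paths E src trg s v" "\<forall>e\<in>E. trg e \<in> V" "s \<in> V" "finite V" "s \<noteq> v"
  shows "card P + 1 \<le> card V" "P \<subseteq> E" "P \<noteq> {}" "finite P"
proof -
  obtain p where p: "P = set p" "is_spath E src trg s v p" using assms(1) unfolding paths_def by auto
  show "card P + 1 \<le> card V" "P \<subseteq> E" using spath_facts[OF p(2) assms(2-4)] p(1) by auto
  show "P \<noteq> {}" using p assms(5) unfolding is_spath_def by auto
  show "finite P" using p by simp
qed

lemma copt_props:
  assumes "finite E" "P \<in> paths E src trg s t" "sum r P \<le> R"
  shows "copt E src trg s t R d r \<le> sum d P"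
    and "\<exists>Q\<in>paths E src trg s t. sum r Q \<le> R \<and> copt E src trg s t R d r = sum d Q"
proof -
  let ?A = "{sum d P | P. P \<in> paths E src trg s t \<and> sum r P \<le> R}"
  have eq: "?A = sum d ` {P \<in> paths E src trg s t. sum r P \<le> R}" by auto
  have "paths E src trg s t \<subseteq> Pow E" unfolding paths_def is_spath_def by auto
  hence "finite {P \<in> paths E src trg s t. sum r P \<le> R}" using assms(1)
    by (simp add: finite_subset)
  hence fin: "finite ?A" using eq by simp
  have mem: "sum d P \<in> ?A" using assms by auto
  show "copt E src trg s t R d r \<le> sum d P"
    unfolding copt_def using fin mem by (simp add: cInf_lower bdd_below_finite)
  have "Inf ?A \<in> ?A" proof -
    have ne: "?A \<noteq> {}" using mem by blast
    show ?thesis using cInf_eq_Min[OF fin ne] Min_in[OF fin ne] by simp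
  qed
  thus "\<exists>Q\<in>paths E src trg s t. sum r Q \<le> R \<and> copt E src trg s t R d r = sum d Q"
    unfolding copt_def by auto
qed

lemma floor_half: "real_of_int \<lfloor>(x::real) / 2\<rfloor> \<le> real_of_int \<lfloor>x\<rfloor> / 2"
proof -
  have "real_of_int (2 * \<lfloor>x / 2\<rfloor>) \<le> x" using of_int_floor_le[of "x/2"] by simp
  hence "2 * \<lfloor>x / 2\<rfloor> \<le> \<lfloor>x\<rfloor>" by (simp add: le_floor_iff)
  thus ?thesis by linarith
qed

lemma floor_sum_bounds:
  assumes "S > 0" "finite P"
  shows "sum (floor_cost S c) P \<le> sum c P / S"
    and "sum c P / S - real (card P) \<le> sum (floor_cost S c) P"
proof -
  have "sum (floor_cost S c) P \<le> sum (\<lambda>e. c e / S) P"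
    by (rule sum_mono) (simp add: floor_cost_def)
  thus "sum (floor_cost S c) P \<le> sum c P / S" by (simp add: sum_divide_distrib)
  have "sum (\<lambda>e. c e / S - 1) P \<le> sum (floor_cost S c) P"
    by (rule sum_mono) (simp add: floor_cost_def less_imp_le)
  thus "sum c P / S - real (card P) \<le> sum (floor_cost S c) P"
    by (simp add: sum_subtractf sum_divide_distrib)
qed


locale rsp =
  fixes V E :: "nat set" and src trg :: "nat \<Rightarrow> nat" and c r :: "nat \<Rightarrow> real"
    and s t :: nat and R :: real and es :: "nat \<Rightarrow> nat" and b :: nat
  assumes finV: "finite V" and finE: "finite E"
    and inV: "\<forall>e\<in>E. src e \<in> V \<and> trg e \<in> V"
    and nonneg: "\<forall>e\<in>E. 0 \<le> c e \<and> 0 \<le> r e"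
    and sV: "s \<in> V" and tV: "t \<in> V" and st: "s \<noteq> t"
    and feas: "\<exists>P\<in>paths E src trg s t. sum r P \<le> R"
    and cpos: "copt E src trg s t R c r > 0"
    and bij: "bij_betw es {1..card E} E"
    and cmono: "\<forall>i j. 1 \<le> i \<and> i \<le> j \<and> j \<le> card E \<longrightarrow> c (es i) \<le> c (es j)"
    and b1: "1 \<le> b" and bn: "b \<le> card V"
begin

lemma trgV: "\<forall>e\<in>E. trg e \<in> V" using inV by auto

lemma pf:
  assumes "P \<in> paths E src trg s t"
  shows "card P + 1 \<le> card V" "P \<subseteq> E" "P \<noteq> {}" "finite P"
  using path_facts[OF assms trgV sV finV st] by auto

lemma n2: "2 \<le> card V"
proof -
  have "{s, t} \<subseteq> V" using sV tV by auto
  hence "card {s, t} \<le> card V" using finV card_mono by blast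
  thus ?thesis using st by simp
qed

definition jj where "jj = jstar E src trg s t R r es"
definition LL where "LL = boundL E src trg s t R c r es"

lemma LL_eq: "LL = c (es jj)" unfolding LL_def jj_def boundL_def by simp

lemma jj_props: "\<exists>P\<in>paths E src trg s t. sum r P \<le> R \<and> P \<subseteq> es ` {1..jj}" "jj \<le> card E"
proof -
  have img: "es ` {1..card E} = E" using bij bij_betw_imp_surj_on by blast
  have ex: "\<exists>P\<in>paths E src trg s t. sum r P \<le> R \<and> P \<subseteq> es ` {1..card E}"
    using feas pf(2) img by auto
  show "\<exists>P\<in>paths E src trg s t. sum r P \<le> R \<and> P \<subseteq> es ` {1..jj}"
    unfolding jj_def jstar_def by (rule LeastI, rule ex)
  show "jj \<le> card E" unfolding jj_def jstar_def by (rule Least_le, rule ex)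
qed

lemma jj_pos: "1 \<le> jj"
proof (rule ccontr)
  assume "\<not> 1 \<le> jj"
  hence "jj = 0" by simp
  then show False using jj_props(1) pf(3) by auto
qed

lemma exists_big:
  assumes "P \<in> paths E src trg s t" "sum r P \<le> R"
  shows "\<exists>e\<in>P. LL \<le> c e"
proof (rule ccontr)
  assume "\<not> (\<exists>e\<in>P. LL \<le> c e)"
  hence lt: "\<forall>e\<in>P. c e < LL" by auto
  have "P \<subseteq> es ` {1..jj - 1}"
  proof
    fix e assume eP: "e \<in> P"
    hence "e \<in> E" using pf(2)[OF assms(1)] by auto
    then obtain i where i: "i \<in> {1..card E}" "es i = e"
      using bij bij_betw_imp_surj_on by (metis imageE)
    have "i < jj"
    proof (rule ccontr)
      assume "\<not> i < jj"
      hence "c (es jj) \<le> c (es i)" using cmono jj_pos i(1) by auto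
      thus False using lt eP i(2) LL_eq by auto
    qed
    thus "e \<in> es ` {1..jj - 1}" using i by auto
  qed
  hence "\<exists>P\<in>paths E src trg s t. sum r P \<le> R \<and> P \<subseteq> es ` {1..jj - 1}" using assms by auto
  moreover have "\<not> (\<exists>P\<in>paths E src trg s t. sum r P \<le> R \<and> P \<subseteq> es ` {1..jj - 1})"
    unfolding jj_def jstar_def
    by (rule not_less_Least) (use jj_pos in \<open>simp add: jj_def jstar_def\<close>)
  ultimately show False by blast
qed

lemma sum_ge_L:
  assumes "P \<in> paths E src trg s t" "sum r P \<le> R"
  shows "LL \<le> sum c P"
proof -
  obtain e where e: "e \<in> P" "LL \<le> c e" using exists_big[OF assms] by auto
  have "c e \<le> sum c P"
    using pf[OF assms(1)] e(1) nonneg by (intro member_le_sum) auto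
  thus ?thesis using e by simp
qed

lemma upper_path: "\<exists>P\<in>paths E src trg s t. sum r P \<le> R \<and> sum c P \<le> (real (card V) - 1) * LL"
proof -
  obtain P where P: "P \<in> paths E src trg s t" "sum r P \<le> R" "P \<subseteq> es ` {1..jj}"
    using jj_props(1) by auto
  have "sum c P \<le> sum (\<lambda>_. LL) P"
  proof (rule sum_mono)
    fix e assume "e \<in> P"
    then obtain i where i: "i \<in> {1..jj}" "es i = e" using P(3) by auto
    thus "c e \<le> LL" using cmono jj_props(2) LL_eq by auto
  qed
  also have "\<dots> = real (card P) * LL" by simp
  finally have 1: "sum c P \<le> real (card P) * LL" .
  have "real (card P) \<le> real (card V) - 1" using pf(1)[OF P(1)] by simp
  moreover have "0 \<le> LL"
  proof -
    have "jj \<in> {1..card E}" using jj_pos jj_props(2) by auto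
    hence "es jj \<in> E" using bij bij_betwE by blast
    thus ?thesis using nonneg LL_eq by auto
  qed
  ultimately have "real (card P) * LL \<le> (real (card V) - 1) * LL" by (simp add: mult_right_mono)
  thus ?thesis using 1 P by auto
qed

lemma copt_bounds: "LL \<le> copt E src trg s t R c r" "copt E src trg s t R c r \<le> (real (card V) - 1) * LL"
proof -
  obtain P where P: "P \<in> paths E src trg s t" "sum r P \<le> R" using feas by auto
  obtain Q where Q: "Q \<in> paths E src trg s t" "sum r Q \<le> R" "copt E src trg s t R c r = sum c Q"
    using copt_props(2)[OF finE P, of c] by auto
  show "LL \<le> copt E src trg s t R c r" using sum_ge_L[OF Q(1,2)] Q(3) by simp
  obtain P' where P': "P' \<in> paths E src trg s t" "sum r P' \<le> R" "sum c P' \<le> (real (card V) - 1) * LL"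
    using upper_path by auto
  show "copt E src trg s t R c r \<le> (real (card V) - 1) * LL"
    using copt_props(1)[OF finE P'(1,2), of c] P'(3) by simp
qed

lemma LL_pos: "0 < LL"
proof (rule ccontr)
  assume "\<not> 0 < LL"
  hence "(real (card V) - 1) * LL \<le> 0" using n2 by (simp add: mult_nonneg_nonpos)
  thus False using copt_bounds(2) cpos by simp
qed

definition SS where "SS i = scaleS V E src trg s t R c r es i"
definition ci where "ci i = copt_i V E src trg s t R c r es i"
definition kk where "kk = ls_iter V E src trg s t R c r es b"

lemma SS_eq: "SS i = LL / 2 ^ Suc i"
  using n2 unfolding SS_def scaleS_def boundU_def LL_def by (simp add: field_simps)

lemma SS_pos: "0 < SS i" using SS_eq LL_pos by simp

lemma ci_eq: "ci i = copt E src trg s t R (floor_cost (SS i) c) r"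
  unfolding ci_def copt_i_def SS_def by simp

lemma fails_iff: "exact_fails V E src trg s t R c r es b i \<longleftrightarrow> real b < ci i"
  unfolding exact_fails_def ci_def by simp

lemma attained: "\<exists>Q\<in>paths E src trg s t. sum r Q \<le> R \<and> copt E src trg s t R d r = sum d Q"
proof -
  obtain P where P: "P \<in> paths E src trg s t" "sum r P \<le> R" using feas by auto
  show ?thesis using copt_props(2)[OF finE P] by blast
qed

lemma ci_lower: "2 ^ Suc i - (real (card V) - 1) \<le> ci i"
proof -
  obtain Q where Q: "Q \<in> paths E src trg s t" "sum r Q \<le> R" "ci i = sum (floor_cost (SS i) c) Q"
    using attained[of "floor_cost (SS i) c"] ci_eq by auto
  have "sum c Q / SS i - real (card Q) \<le> ci i"
    using floor_sum_bounds(2)[OF SS_pos pf(4)[OF Q(1)], of c] Q(3) by simp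
  moreover have "LL / SS i \<le> sum c Q / SS i"
    using divide_right_mono[OF sum_ge_L[OF Q(1,2)] less_imp_le[OF SS_pos[of i]]] .
  moreover have "LL / SS i = 2 ^ Suc i" using SS_eq LL_pos by simp
  moreover have "real (card Q) \<le> real (card V) - 1" using pf(1)[OF Q(1)] by simp
  ultimately show ?thesis by linarith
qed

lemma ci_nonneg: "0 \<le> ci i"
proof -
  obtain Q where Q: "Q \<in> paths E src trg s t" "sum r Q \<le> R" "ci i = sum (floor_cost (SS i) c) Q"
    using attained[of "floor_cost (SS i) c"] ci_eq by auto
  have "\<forall>e\<in>Q. 0 \<le> floor_cost (SS i) c e"
  proof
    fix e assume "e \<in> Q"
    hence "0 \<le> c e" using pf(2)[OF Q(1)] nonneg by auto
    hence "0 \<le> c e / SS i" using SS_pos[of i] by simp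
    thus "0 \<le> floor_cost (SS i) c e" unfolding floor_cost_def by simp
  qed
  thus ?thesis using Q(3) by (simp add: sum_nonneg)
qed

lemma ci_half: "ci i \<le> ci (Suc i) / 2"
proof -
  obtain Q where Q: "Q \<in> paths E src trg s t" "sum r Q \<le> R"
      "ci (Suc i) = sum (floor_cost (SS (Suc i)) c) Q"
    using attained[of "floor_cost (SS (Suc i)) c"] ci_eq by auto
  have "ci i \<le> sum (floor_cost (SS i) c) Q" using copt_props(1)[OF finE Q(1,2)] ci_eq by simp
  also have "\<dots> \<le> sum (\<lambda>e. floor_cost (SS (Suc i)) c e / 2) Q"
  proof (rule sum_mono)
    fix e
    have "SS i = 2 * SS (Suc i)" using SS_eq by simp
    hence h: "c e / SS i = (c e / SS (Suc i)) / 2" by simp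
    show "floor_cost (SS i) c e \<le> floor_cost (SS (Suc i)) c e / 2"
      unfolding floor_cost_def h by (rule floor_half)
  qed
  also have "\<dots> = ci (Suc i) / 2" using Q(3) by (simp add: sum_divide_distrib)
  finally show ?thesis .
qed

lemma fails_big: assumes "card V \<le> 2 ^ i" shows "exact_fails V E src trg s t R c r es b i"
proof -
  have "real (card V) \<le> 2 ^ i" using assms by (metis of_nat_le_iff of_nat_numeral of_nat_power)
  moreover have "real b \<le> real (card V)" using bn by simp
  ultimately have "real b < 2 * (2::real) ^ i - (real (card V) - 1)" by linarith
  hence "real b < 2 ^ Suc i - (real (card V) - 1)" by simp
  thus ?thesis using ci_lower[of i] fails_iff by simp
qed

lemma ex_fail: "\<exists>i. exact_fails V E src trg s t R c r es b i"
  using fails_big[of "card V"] by (meson less_exp less_imp_le)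

lemma kk_fails: "real b < ci kk"
proof -
  have "exact_fails V E src trg s t R c r es b (LEAST i. exact_fails V E src trg s t R c r es b i)"
    by (rule LeastI_ex[OF ex_fail])
  thus ?thesis unfolding kk_def ls_iter_def using fails_iff by blast
qed

lemma kk_before: assumes "i < kk" shows "ci i \<le> real b"
proof -
  have "\<not> exact_fails V E src trg s t R c r es b i"
    using assms not_less_Least unfolding kk_def ls_iter_def by blast
  thus ?thesis using fails_iff[of i] by simp
qed

lemma kk_log: "real kk \<le> log 2 (real (card V)) + 1"
proof (cases kk)
  case 0
  have "0 \<le> log 2 (real (card V))" using n2 by simp
  thus ?thesis using 0 by simp
next
  case (Suc k')
  have "\<not> exact_fails V E src trg s t R c r es b k'"
    using kk_before[of k'] fails_iff Suc by force
  hence "\<not> card V \<le> 2 ^ k'" using fails_big by blast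
  hence lt: "real (2 ^ k') < real (card V)" by simp
  have "log 2 (real (2 ^ k')) < log 2 (real (card V))"
    using lt by (subst log_less_cancel_iff) auto
  hence "real k' < log 2 (real (card V))" by (simp add: log_nat_power)
  thus ?thesis using Suc by simp
qed

lemma sum_ci: "(\<Sum>i\<le>j. ci i) \<le> 2 * ci j"
proof (induction j)
  case 0 thus ?case using ci_nonneg[of 0] by simp
next
  case (Suc j)
  thus ?case using ci_half[of j] by simp
qed

lemma sum_min: "(\<Sum>i\<le>kk. min (real b) (ci i)) \<le> 3 * real b"
proof (cases kk)
  case 0 thus ?thesis by simp
next
  case (Suc k')
  have "(\<Sum>i\<le>k'. min (real b) (ci i)) \<le> (\<Sum>i\<le>k'. ci i)" by (rule sum_mono) simp
  also have "\<dots> \<le> 2 * ci k'" by (rule sum_ci)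
  also have "\<dots> \<le> 2 * real b" using kk_before[of k'] Suc by simp
  finally have "(\<Sum>i\<le>k'. min (real b) (ci i)) \<le> 2 * real b" .
  thus ?thesis using Suc by simp
qed

lemma time_bound:
  assumes "0 < f (card V) (card E)"
  shows "ls_time f V E src trg s t R c r es b
     \<le> 4 * f (card V) (card E) * (1 + real b + log 2 (real (card V)))"
proof -
  have eq: "ls_time f V E src trg s t R c r es b
     = f (card V) (card E) * (\<Sum>i\<le>kk. 2 + min (real b) (ci i))"
    unfolding ls_time_def kk_def ci_def by (simp add: sum_distrib_left)
  have "(\<Sum>i\<le>kk. 2 + min (real b) (ci i)) = 2 * (real kk + 1) + (\<Sum>i\<le>kk. min (real b) (ci i))"
    by (simp add: sum.distrib)
  also have "\<dots> \<le> 4 * (1 + real b + log 2 (real (card V)))"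
  proof -
    have "0 \<le> log 2 (real (card V))" using n2 by simp
    moreover have "0 \<le> real b" by simp
    moreover note sum_min kk_log
    ultimately show ?thesis by argo
  qed
  finally show ?thesis using eq assms by (simp add: mult_left_mono)
qed

lemma lsb_eq: "lsbounds V E src trg s t R c r es b =
   (SS kk * real b, if kk = 0 then real (card V) * LL else 2 * SS kk * (real b + real (card V)))"
  unfolding lsbounds_def Let_def kk_def[symmetric] SS_def[symmetric] boundU_def LL_def by simp

lemma lower_bound: "SS kk * real b \<le> copt E src trg s t R c r"
proof -
  obtain Q where Q: "Q \<in> paths E src trg s t" "sum r Q \<le> R" "copt E src trg s t R c r = sum c Q"
    using attained[of c] by auto
  have "ci kk \<le> sum (floor_cost (SS kk) c) Q" using copt_props(1)[OF finE Q(1,2)] ci_eq by simp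
  also have "\<dots> \<le> sum c Q / SS kk" using floor_sum_bounds(1)[OF SS_pos pf(4)[OF Q(1)]] .
  finally have "real b < sum c Q / SS kk" using kk_fails by simp
  hence "SS kk * real b < sum c Q" using SS_pos[of kk] by (simp add: pos_less_divide_eq mult.commute)
  thus ?thesis using Q(3) by simp
qed

lemma upper_bound: "copt E src trg s t R c r \<le> (if kk = 0 then real (card V) * LL else 2 * SS kk * (real b + real (card V)))"
proof (cases kk)
  case 0
  have "(real (card V) - 1) * LL \<le> real (card V) * LL" using LL_pos by (simp add: algebra_simps)
  thus ?thesis using 0 copt_bounds(2) by simp
next
  case (Suc k')
  obtain Q where Q: "Q \<in> paths E src trg s t" "sum r Q \<le> R" "ci k' = sum (floor_cost (SS k') c) Q"
    using attained[of "floor_cost (SS k') c"] ci_eq by auto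
  have "sum c Q / SS k' - real (card Q) \<le> ci k'"
    using floor_sum_bounds(2)[OF SS_pos pf(4)[OF Q(1)], of c] Q(3) by simp
  moreover have "ci k' \<le> real b" using kk_before Suc by simp
  moreover have "real (card Q) \<le> real (card V)" using pf(1)[OF Q(1)] by simp
  ultimately have "sum c Q / SS k' \<le> real b + real (card V)" by linarith
  hence "sum c Q \<le> SS k' * (real b + real (card V))" using SS_pos[of k']
    by (simp add: pos_divide_le_eq mult.commute)
  moreover have "SS k' = 2 * SS kk" using Suc SS_eq by simp
  moreover have "copt E src trg s t R c r \<le> sum c Q" using copt_props(1)[OF finE Q(1,2)] .
  ultimately show ?thesis using Suc by simp
qed

lemma ratio_bound: "(if kk = 0 then real (card V) * LL else 2 * SS kk * (real b + real (card V))) / (SS kk * real b)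
   \<le> 2 * (1 + real (card V) / real b)"
proof (cases "kk = 0")
  case True
  have "SS 0 = LL / 2" using SS_eq by simp
  hence "real (card V) * LL / (SS 0 * real b) = 2 * (real (card V) / real b)"
    using LL_pos b1 by (simp add: field_simps)
  moreover have "0 \<le> real (card V) / real b" by simp
  ultimately show ?thesis using True by simp
next
  case False
  have "2 * SS kk * (real b + real (card V)) / (SS kk * real b) = 2 * (1 + real (card V) / real b)"
    using SS_pos[of kk] b1 by (simp add: field_simps)
  thus ?thesis using False by simp
qed

lemma main:
  assumes "0 < f (card V) (card E)"
  shows "(\<exists>i. exact_fails V E src trg s t R c r es b i) \<and>
      (let LU = lsbounds V E src trg s t R c r es b in
        fst LU \<le> copt E src trg s t R c r \<and>
        copt E src trg s t R c r \<le> snd LU \<and>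
        snd LU / fst LU \<le> 2 * (1 + real (card V) / real b)) \<and>
      ls_time f V E src trg s t R c r es b
        \<le> 4 * f (card V) (card E) * (1 + real b + log 2 (real (card V)))"
  using ex_fail lower_bound upper_bound ratio_bound time_bound[of f, OF assms]
  unfolding lsb_eq Let_def by simp

end

lemma main_top:
  fixes V E :: "nat set" and src trg :: "nat \<Rightarrow> nat" and c r :: "nat \<Rightarrow> real"
    and s t :: nat and R :: real and es :: "nat \<Rightarrow> nat" and b :: nat and f :: "nat \<Rightarrow> nat \<Rightarrow> real"
  assumes A: "finite V \<and> finite E \<and>
      (\<forall>e\<in>E. src e \<in> V \<and> trg e \<in> V) \<and>
      weakly_connected V E src trg \<and>
      (\<forall>e\<in>E. 0 \<le> c e \<and> 0 \<le> r e) \<and>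
      s \<in> V \<and> t \<in> V \<and> s \<noteq> t \<and> 0 \<le> R \<and>
      (\<exists>P\<in>paths E src trg s t. sum r P \<le> R) \<and>
      copt E src trg s t R c r > 0 \<and>
      bij_betw es {1..card E} E \<and>
      (\<forall>i j. 1 \<le> i \<and> i \<le> j \<and> j \<le> card E \<longrightarrow> c (es i) \<le> c (es j)) \<and>
      1 \<le> b \<and> b \<le> card V \<and>
      0 < f (card V) (card E)"
  shows "(\<exists>i. exact_fails V E src trg s t R c r es b i) \<and>
      (let LU = lsbounds V E src trg s t R c r es b in
        fst LU \<le> copt E src trg s t R c r \<and>
        copt E src trg s t R c r \<le> snd LU \<and>
        snd LU / fst LU \<le> 2 * (1 + real (card V) / real b)) \<and>
      ls_time f V E src trg s t R c r es b
        \<le> 4 * f (card V) (card E) * (1 + real b + log 2 (real (card V)))"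
proof -
  interpret rsp V E src trg c r s t R es b
    using A by unfold_locales auto
  have fpos: "0 < f (card V) (card E)" using A by blast
  show ?thesis using main[of f, OF fpos] .
qed

theorem theorem2:
  "\<exists>C1 C2. 0 < C1 \<and> 0 < C2 \<and>
    (\<forall>(V::nat set) (E::nat set) (src::nat \<Rightarrow> nat) (trg::nat \<Rightarrow> nat)
       (c::nat \<Rightarrow> real) (r::nat \<Rightarrow> real) (s::nat) (t::nat) (R::real)
       (es::nat \<Rightarrow> nat) (b::nat) (f::nat \<Rightarrow> nat \<Rightarrow> real).
      finite V \<and> finite E \<and>
      (\<forall>e\<in>E. src e \<in> V \<and> trg e \<in> V) \<and>
      weakly_connected V E src trg \<and>
      (\<forall>e\<in>E. 0 \<le> c e \<and> 0 \<le> r e) \<and>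
      s \<in> V \<and> t \<in> V \<and> s \<noteq> t \<and> 0 \<le> R \<and>
      (\<exists>P\<in>paths E src trg s t. sum r P \<le> R) \<and>
      copt E src trg s t R c r > 0 \<and>
      bij_betw es {1..card E} E \<and>
      (\<forall>i j. 1 \<le> i \<and> i \<le> j \<and> j \<le> card E \<longrightarrow> c (es i) \<le> c (es j)) \<and>
      1 \<le> b \<and> b \<le> card V \<and>
      0 < f (card V) (card E)
      \<longrightarrow>
      (\<exists>i. exact_fails V E src trg s t R c r es b i) \<and>
      (let LU = lsbounds V E src trg s t R c r es b in
        fst LU \<le> copt E src trg s t R c r \<and>
        copt E src trg s t R c r \<le> snd LU \<and>
        snd LU / fst LU \<le> C1 * (1 + real (card V) / real b)) \<and>
      ls_time f V E src trg s t R c r es b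
        \<le> C2 * f (card V) (card E) * (1 + real b + log 2 (real (card V))))"
proof -
  show ?thesis
    apply (rule exI[of _ "2::real"], rule exI[of _ "4::real"])
    apply (intro conjI)
      apply simp
     apply simp
    apply (intro allI impI)
    apply (rule main_top)
    apply assumption
    done
qed

end
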